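(* In a nondeterministic Outcome Logic instance, for every program $C$ (terminating after finitely many steps), outcome assertion $\varphi$ and atomic assertions $Q_1,\ldots,Q_n$: $\not\vDash\langle\varphi\rangle\,C\,\langle\bigoplus_{i=1}^nQ_i\rangle$ holds iff there is an outcome assertion $\varphi'$ with $\varphi'\Rightarrow\varphi$ and $\mathsf{sat}(\varphi')$ such that either (i) $\vDash\langle\varphi'\rangle\,C\,\langle\overline{Q}_i\rangle$ for some $i$, or (ii) $\vDash\langle\varphi'\rangle\,C\,\langle(\bigwedge_{i=1}^n\overline{Q}_i)\oplus\top\rangle$, or (iii) $\vDash\langle\varphi'\rangle\,C\,\langle\top^\oplus\rangle$.
   Context: Nondeterministic instance: powerset monad with $\mathsf{bind}(S,k)=\bigcup_{x\in S}k(x)$, $\mathsf{unit}(x)=\{x\}$, monoid $(2^\Sigma,\cup,\emptyset)$. Programs $C::=\mathbb{0}\mid\mathbb{1}\mid C_1;C_2\mid C_1+C_2\mid C^\star\mid c$ have semantics $[\![\mathbb{0}]\!](\sigma)=\emptyset$, $[\![\mathbb{1}]\!](\sigma)=\{\sigma\}$, $[\![C_1;C_2]\!](\sigma)=\bigcup_{\tau\in[\![C_1]\!](\sigma)}[\![C_2]\!](\tau)$, $[\![C_1+C_2]\!](\sigma)=[\![C_1]\!](\sigma)\cup[\![C_2]\!](\sigma)$, $[\![C^\star]\!]$ the least fixed point of $f\mapsto\lambda\sigma.f^\dagger([\![C]\!](\sigma))\cup\{\sigma\}$ with $f^\dagger(S)=\bigcup_{\sigma\in S}f(\sigma)$. Atomic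 commands are those of the paper's guarded command languages: $\mathsf{assume}\ e$ (returns $\{\sigma\}$ if Boolean expression $e$ is true in $\sigma$, else $\emptyset$) and deterministic commands such as assignment $x:=e$ (and the heap commands of the memory language), whose effect on each state is a single state. Atomic assertions carry a satisfaction relation $\vDash_\Sigma$ on states and are closed under negation $\overline{Q}$ ($\sigma\vDash_\Sigma\overline{Q}$ iff $\sigma\not\vDash_\Sigma Q$); a set $S$ satisfies atomic $P$ iff $S\neq\emptyset$ and all $\sigma\in S$ satisfy $P$. Outcome assertions: $\top,\bot,\top^\oplus,\land,\oplus,\Rightarrow$, atomic; $S\vDash\top^\oplus$ iff $S=\emptyset$; $S\vDash\varphi\oplus\psi$ iff $S=S_1\cup S_2$ with $S_1\vDash\varphi,S_2\vDash\psi$; other connectives classical. $\vDash\langle\varphi\rangle C\langle\psi\rangle$ iff for all $S\subseteq\Sigma$, $S\vDash\varphi$ implies $[\![C]\!]^\dagger(S)\vDash\psi$. $\varphi'\Rightarrow\varphi$ means every set satisfying $\varphi'$ satisfies $\varphi$; $\mathsf{sat}(\varphi')$ means some set satisfies $\varphi'$. *)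

theory Defs
  imports Main
begin

definition dagger :: "('s \<Rightarrow> 's set) \<Rightarrow> 's set \<Rightarrow> 's set" where
  "dagger f S = (\<Union>\<sigma>\<in>S. f \<sigma>)"

text \<open>Atomic commands of the guarded command languages: assume e (Boolean test on
  states) and deterministic commands (assignment, heap commands, ...), modelled as an
  arbitrary state transformer.\<close>
datatype 's acmd = Assume "'s \<Rightarrow> bool" | Det "'s \<Rightarrow> 's"

fun acmd_sem :: "'s acmd \<Rightarrow> 's \<Rightarrow> 's set" where
  "acmd_sem (Assume e) \<sigma> = (if e \<sigma> then {\<sigma>} else {})"
| "acmd_sem (Det f) \<sigma> = {f \<sigma>}"

datatype 's prog =
    Zero
  | One
  | Seq "'s prog" "'s prog"
  | Plus "'s prog" "'s prog"
  | Star "'s prog"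
  | Atom "'s acmd"

definition star_sem :: "('s \<Rightarrow> 's set) \<Rightarrow> 's \<Rightarrow> 's set" where
  "star_sem c = lfp (\<lambda>f \<sigma>. dagger f (c \<sigma>) \<union> {\<sigma>})"

primrec sem :: "'s prog \<Rightarrow> 's \<Rightarrow> 's set" where
  "sem Zero \<sigma> = {}"
| "sem One \<sigma> = {\<sigma>}"
| "sem (Seq C1 C2) \<sigma> = dagger (sem C2) (sem C1 \<sigma>)"
| "sem (Plus C1 C2) \<sigma> = sem C1 \<sigma> \<union> sem C2 \<sigma>"
| "sem (Star C) \<sigma> = star_sem (sem C) \<sigma>"
| "sem (Atom c) \<sigma> = acmd_sem c \<sigma>"

datatype 's assn =
    ATop
  | ABot
  | ATopPlus
  | AAnd "'s assn" "'s assn"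
  | AOplus "'s assn" "'s assn"
  | AImp "'s assn" "'s assn"
  | AAtom "'s \<Rightarrow> bool"

definition neg_atom :: "('s \<Rightarrow> bool) \<Rightarrow> ('s \<Rightarrow> bool)" where
  "neg_atom Q = (\<lambda>\<sigma>. \<not> Q \<sigma>)"

fun sats :: "'s set \<Rightarrow> 's assn \<Rightarrow> bool" where
  "sats S ATop = True"
| "sats S ABot = False"
| "sats S ATopPlus = (S = {})"
| "sats S (AAnd p q) = (sats S p \<and> sats S q)"
| "sats S (AOplus p q) = (\<exists>S1 S2. S = S1 \<union> S2 \<and> sats S1 p \<and> sats S2 q)"
| "sats S (AImp p q) = (sats S p \<longrightarrow> sats S q)"
| "sats S (AAtom P) = (S \<noteq> {} \<and> (\<forall>\<sigma>\<in>S. P \<sigma>))"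

fun bigoplus :: "'s assn list \<Rightarrow> 's assn" where
  "bigoplus [] = ATopPlus"
| "bigoplus [p] = p"
| "bigoplus (p # ps) = AOplus p (bigoplus ps)"

fun bigand :: "'s assn list \<Rightarrow> 's assn" where
  "bigand [] = ATop"
| "bigand [p] = p"
| "bigand (p # ps) = AAnd p (bigand ps)"

definition entails :: "'s assn \<Rightarrow> 's assn \<Rightarrow> bool" where
  "entails p q = (\<forall>S. sats S p \<longrightarrow> sats S q)"

definition satisfiable :: "'s assn \<Rightarrow> bool" where
  "satisfiable p = (\<exists>S. sats S p)"

definition valid :: "'s assn \<Rightarrow> 's prog \<Rightarrow> 's assn \<Rightarrow> bool" where
  "valid p C q = (\<forall>S. sats S p \<longrightarrow> sats (dagger (sem C) S) q)"

end

theory Submission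
  imports Defs
begin

lemma bigoplus_cons2: "bigoplus (p # q # ps) = AOplus p (bigoplus (q # ps))" by simp

lemma oplus_char:
  "Qs \<noteq> [] \<Longrightarrow> sats T (bigoplus (map AAtom Qs)) \<longleftrightarrow>
     (\<forall>Q\<in>set Qs. \<exists>t\<in>T. Q t) \<and> (\<forall>t\<in>T. \<exists>Q\<in>set Qs. Q t)"
proof (induction Qs arbitrary: T)
  case Nil then show ?case by simp
next
  case (Cons q ps)
  show ?case
  proof (cases "ps = []")
    case True then show ?thesis by auto
  next
    case False
    then obtain p ps' where ps: "ps = p # ps'" by (cases ps) auto
    have eq: "sats T (bigoplus (map AAtom (q # ps))) \<longleftrightarrow>
       (\<exists>S1 S2. T = S1 \<union> S2 \<and> S1 \<noteq> {} \<and> (\<forall>t\<in>S1. q t) \<and>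
          (\<forall>Q\<in>set ps. \<exists>t\<in>S2. Q t) \<and> (\<forall>t\<in>S2. \<exists>Q\<in>set ps. Q t))"
      using Cons.IH[OF False] unfolding ps list.map bigoplus_cons2 sats.simps by simp
    show ?thesis
    proof
      assume "sats T (bigoplus (map AAtom (q # ps)))"
      then obtain S1 S2 where A: "T = S1 \<union> S2" "S1 \<noteq> {}" "\<forall>t\<in>S1. q t"
          "\<forall>Q\<in>set ps. \<exists>t\<in>S2. Q t" "\<forall>t\<in>S2. \<exists>Q\<in>set ps. Q t"
        unfolding eq by blast
      have "\<forall>Q\<in>set (q # ps). \<exists>t\<in>T. Q t"
      proof
        fix Q assume "Q \<in> set (q # ps)"
        then have "Q = q \<or> Q \<in> set ps" by simp
        then show "\<exists>t\<in>T. Q t"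
        proof
          assume "Q = q"
          obtain t where "t \<in> S1" using A(2) by blast
          then show ?thesis using A(1,3) \<open>Q = q\<close> by blast
        next
          assume "Q \<in> set ps"
          then obtain t where "t \<in> S2" "Q t" using A(4) by blast
          then show ?thesis using A(1) by blast
        qed
      qed
      moreover have "\<forall>t\<in>T. \<exists>Q\<in>set (q # ps). Q t"
      proof
        fix t assume "t \<in> T"
        then have "t \<in> S1 \<or> t \<in> S2" using A(1) by blast
        then show "\<exists>Q\<in>set (q # ps). Q t"
        proof
          assume "t \<in> S1" then have "q t" using A(3) by blast
          then show ?thesis by simp
        next
          assume "t \<in> S2" then obtain Q where "Q \<in> set ps" "Q t" using A(5) by blast
          then show ?thesis by (intro bexI[of _ Q]) simp_all
        qed
      qed
      ultimately show "(\<forall>Q\<in>set (q # ps). \<exists>t\<in>T. Q t) \<and> (\<forall>t\<in>T. \<exists>Q\<in>set (q # ps). Q t)" ..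
    next
      assume H: "(\<forall>Q\<in>set (q # ps). \<exists>t\<in>T. Q t) \<and> (\<forall>t\<in>T. \<exists>Q\<in>set (q # ps). Q t)"
      define S1 where "S1 = {t\<in>T. q t}"
      define S2 where "S2 = {t\<in>T. \<exists>Q\<in>set ps. Q t}"
      have "T = S1 \<union> S2"
      proof
        show "S1 \<union> S2 \<subseteq> T" unfolding S1_def S2_def by blast
        show "T \<subseteq> S1 \<union> S2"
        proof
          fix t assume t: "t \<in> T"
          then obtain Q where Q: "Q \<in> set (q # ps)" "Q t" using H by blast
          show "t \<in> S1 \<union> S2"
          proof (cases "Q = q")
            case True then show ?thesis using t Q unfolding S1_def by blast
          next
            case False then have "Q \<in> set ps" using Q by simp
            then show ?thesis using t Q unfolding S2_def by blast
          qed
        qed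
      qed
      moreover have "S1 \<noteq> {}" using H unfolding S1_def by auto
      moreover have "\<forall>t\<in>S1. q t" unfolding S1_def by auto
      moreover have "\<forall>Q\<in>set ps. \<exists>t\<in>S2. Q t"
      proof
        fix Q assume Qp: "Q \<in> set ps"
        then have "Q \<in> set (q # ps)" by simp
        then obtain t where "t \<in> T" "Q t" using H by blast
        then show "\<exists>t\<in>S2. Q t" unfolding S2_def using Qp by blast
      qed
      moreover have "\<forall>t\<in>S2. \<exists>Q\<in>set ps. Q t" unfolding S2_def by simp
      ultimately show "sats T (bigoplus (map AAtom (q # ps)))"
        unfolding eq by blast
    qed
  qed
qed

lemma and_char:
  "Qs \<noteq> [] \<Longrightarrow> sats A (bigand (map (\<lambda>Q. AAtom (neg_atom Q)) Qs)) \<longleftrightarrow>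
     A \<noteq> {} \<and> (\<forall>a\<in>A. \<forall>Q\<in>set Qs. \<not> Q a)"
proof (induction Qs)
  case Nil then show ?case by simp
next
  case (Cons q ps)
  show ?case
  proof (cases "ps = []")
    case True then show ?thesis by (auto simp: neg_atom_def)
  next
    case False
    then obtain p ps' where ps: "ps = p # ps'" by (cases ps) auto
    have "sats A (bigand (map (\<lambda>Q. AAtom (neg_atom Q)) (q # ps))) \<longleftrightarrow>
       sats A (AAtom (neg_atom q)) \<and> sats A (bigand (map (\<lambda>Q. AAtom (neg_atom Q)) ps))"
      unfolding ps by simp
    then show ?thesis using Cons.IH[OF False] by (auto simp: neg_atom_def)
  qed
qed
lemma dagger_mono: "S' \<subseteq> S \<Longrightarrow> dagger f S' \<subseteq> dagger f S"
  unfolding dagger_def by auto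

lemma dagger_mem: "\<sigma> \<in> S \<Longrightarrow> f \<sigma> \<subseteq> dagger f S"
  unfolding dagger_def by auto

theorem theorem5p6:
  fixes C :: "'s prog" and \<phi> :: "'s assn" and Qs :: "('s \<Rightarrow> bool) list"
  assumes "Qs \<noteq> []"
  shows "(\<not> valid \<phi> C (bigoplus (map AAtom Qs))) \<longleftrightarrow>
    (\<exists>\<phi>'. entails \<phi>' \<phi> \<and> satisfiable \<phi>' \<and>
       ((\<exists>i<length Qs. valid \<phi>' C (AAtom (neg_atom (Qs ! i))))
        \<or> valid \<phi>' C (AOplus (bigand (map (\<lambda>Q. AAtom (neg_atom Q)) Qs)) ATop)
        \<or> valid \<phi>' C ATopPlus))"
proof
  assume "\<not> valid \<phi> C (bigoplus (map AAtom Qs))"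
  then obtain S where S: "sats S \<phi>" and nT: "\<not> sats (dagger (sem C) S) (bigoplus (map AAtom Qs))"
    unfolding valid_def by auto
  define T where "T = dagger (sem C) S"
  have nT': "\<not> ((\<forall>Q\<in>set Qs. \<exists>t\<in>T. Q t) \<and> (\<forall>t\<in>T. \<exists>Q\<in>set Qs. Q t))"
    using nT oplus_char[OF assms] unfolding T_def by blast
  show "\<exists>\<phi>'. entails \<phi>' \<phi> \<and> satisfiable \<phi>' \<and>
       ((\<exists>i<length Qs. valid \<phi>' C (AAtom (neg_atom (Qs ! i))))
        \<or> valid \<phi>' C (AOplus (bigand (map (\<lambda>Q. AAtom (neg_atom Q)) Qs)) ATop)
        \<or> valid \<phi>' C ATopPlus)"
  proof (cases "T = {}")
    case True
    let ?p = "AAnd \<phi> (AImp (AAtom (\<lambda>x. x \<in> S)) ABot)"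
    let ?q = "AAnd ?p ATop"
    define p where "p = (if S = {} then AAnd \<phi> ATopPlus else AAnd \<phi> (AAtom (\<lambda>x. x \<in> S)))"
    have "entails p \<phi>" unfolding p_def entails_def by auto
    moreover have "satisfiable p" unfolding p_def satisfiable_def using S by (auto intro!: exI[of _ S])
    moreover have "valid p C ATopPlus"
    proof (unfold valid_def, intro allI impI)
      fix S' assume "sats S' p"
      then have "S' \<subseteq> S" unfolding p_def by (auto split: if_splits)
      then show "sats (dagger (sem C) S') ATopPlus"
        using dagger_mono[of S' S "sem C"] True unfolding T_def by auto
    qed
    ultimately show ?thesis by blast
  next
    case False
    show ?thesis
    proof (cases "\<forall>t\<in>T. \<exists>Q\<in>set Qs. Q t")
      case False
      then obtain \<tau> where \<tau>: "\<tau> \<in> T" "\<forall>Q\<in>set Qs. \<not> Q \<tau>" by blast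
      then obtain \<sigma> where \<sigma>: "\<sigma> \<in> S" "\<tau> \<in> sem C \<sigma>" unfolding T_def dagger_def by auto
      define p where "p = AAnd \<phi> (AOplus (AAtom (\<lambda>x. x = \<sigma>)) ATop)"
      have "entails p \<phi>" unfolding p_def entails_def by auto
      moreover have "satisfiable p"
      proof -
        have "S = {\<sigma>} \<union> S" using \<sigma> by blast
        then have "sats S p" unfolding p_def using S \<sigma> by auto
        then show ?thesis unfolding satisfiable_def by blast
      qed
      moreover have "valid p C (AOplus (bigand (map (\<lambda>Q. AAtom (neg_atom Q)) Qs)) ATop)"
      proof (unfold valid_def, intro allI impI)
        fix S' assume "sats S' p"
        then have "\<sigma> \<in> S'" unfolding p_def by auto
        then have "\<tau> \<in> dagger (sem C) S'" using \<sigma> dagger_mem[of \<sigma> S' "sem C"] by auto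
        moreover have "sats {\<tau>} (bigand (map (\<lambda>Q. AAtom (neg_atom Q)) Qs))"
          using and_char[OF assms] \<tau> by auto
        ultimately show "sats (dagger (sem C) S') (AOplus (bigand (map (\<lambda>Q. AAtom (neg_atom Q)) Qs)) ATop)"
          unfolding sats.simps(5)
          by (intro exI[of _ "{\<tau>}"] exI[of _ "dagger (sem C) S'"]) auto
      qed
      ultimately show ?thesis by blast
    next
      case True
      then have "\<not> (\<forall>Q\<in>set Qs. \<exists>t\<in>T. Q t)" using nT' by blast
      then obtain Q where Q: "Q \<in> set Qs" "\<forall>t\<in>T. \<not> Q t" by blast
      then obtain i where i: "i < length Qs" "Qs ! i = Q" by (auto simp: in_set_conv_nth)
      obtain \<tau> where "\<tau> \<in> T" using \<open>T \<noteq> {}\<close> by auto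
      then obtain \<sigma> where \<sigma>: "\<sigma> \<in> S" "\<tau> \<in> sem C \<sigma>" unfolding T_def dagger_def by auto
      define p where "p = AAnd \<phi> (AAnd (AAtom (\<lambda>x. x \<in> S)) (AOplus (AAtom (\<lambda>x. x = \<sigma>)) ATop))"
      have "entails p \<phi>" unfolding p_def entails_def by auto
      moreover have "satisfiable p"
      proof -
        have "S = {\<sigma>} \<union> S" using \<sigma> by blast
        then have "sats S p" unfolding p_def using S \<sigma> by auto
        then show ?thesis unfolding satisfiable_def by blast
      qed
      moreover have "valid p C (AAtom (neg_atom (Qs ! i)))"
      proof (unfold valid_def, intro allI impI)
        fix S' assume "sats S' p"
        then have "\<sigma> \<in> S'" "S' \<subseteq> S" unfolding p_def by auto
        then have "\<tau> \<in> dagger (sem C) S'" "dagger (sem C) S' \<subseteq> T"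
          using \<sigma> dagger_mem[of \<sigma> S' "sem C"] dagger_mono[of S' S "sem C"] unfolding T_def by auto
        then show "sats (dagger (sem C) S') (AAtom (neg_atom (Qs ! i)))"
          using Q i by (auto simp: neg_atom_def)
      qed
      ultimately show ?thesis using i by blast
    qed
  qed
next
  assume "\<exists>\<phi>'. entails \<phi>' \<phi> \<and> satisfiable \<phi>' \<and>
       ((\<exists>i<length Qs. valid \<phi>' C (AAtom (neg_atom (Qs ! i))))
        \<or> valid \<phi>' C (AOplus (bigand (map (\<lambda>Q. AAtom (neg_atom Q)) Qs)) ATop)
        \<or> valid \<phi>' C ATopPlus)"
  then obtain p S where E: "entails p \<phi>" and S: "sats S p" and
    V: "(\<exists>i<length Qs. valid p C (AAtom (neg_atom (Qs ! i))))
        \<or> valid p C (AOplus (bigand (map (\<lambda>Q. AAtom (neg_atom Q)) Qs)) ATop)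
        \<or> valid p C ATopPlus"
    unfolding satisfiable_def by blast
  have S\<phi>: "sats S \<phi>" using E S unfolding entails_def by blast
  define T where "T = dagger (sem C) S"
  have "\<not> ((\<forall>Q\<in>set Qs. \<exists>t\<in>T. Q t) \<and> (\<forall>t\<in>T. \<exists>Q\<in>set Qs. Q t))"
    using V
  proof (elim disjE)
    assume "\<exists>i<length Qs. valid p C (AAtom (neg_atom (Qs ! i)))"
    then obtain i where "i < length Qs" "sats T (AAtom (neg_atom (Qs ! i)))"
      using S unfolding valid_def T_def by blast
    then have m: "Qs ! i \<in> set Qs" and n: "\<forall>t\<in>T. \<not> (Qs ! i) t"
      by (auto simp: neg_atom_def)
    show ?thesis
    proof
      assume "(\<forall>Q\<in>set Qs. \<exists>t\<in>T. Q t) \<and> (\<forall>t\<in>T. \<exists>Q\<in>set Qs. Q t)"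
      then have "\<exists>t\<in>T. (Qs ! i) t" using m by blast
      then show False using n by blast
    qed
  next
    assume "valid p C (AOplus (bigand (map (\<lambda>Q. AAtom (neg_atom Q)) Qs)) ATop)"
    then obtain A B where "T = A \<union> B" "sats A (bigand (map (\<lambda>Q. AAtom (neg_atom Q)) Qs))"
      using S unfolding valid_def T_def by auto
    then have "A \<noteq> {}" "\<forall>a\<in>A. \<forall>Q\<in>set Qs. \<not> Q a" "A \<subseteq> T"
      using and_char[OF assms] by auto
    then obtain a where a: "a \<in> T" "\<forall>Q\<in>set Qs. \<not> Q a" by blast
    show ?thesis
    proof
      assume "(\<forall>Q\<in>set Qs. \<exists>t\<in>T. Q t) \<and> (\<forall>t\<in>T. \<exists>Q\<in>set Qs. Q t)"
      then obtain Q where "Q \<in> set Qs" "Q a" using a(1) by blast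
      then show False using a(2) by blast
    qed
  next
    assume "valid p C ATopPlus"
    then have "T = {}" using S unfolding valid_def T_def by auto
    have "hd Qs \<in> set Qs" using assms by simp
    show ?thesis
    proof
      assume "(\<forall>Q\<in>set Qs. \<exists>t\<in>T. Q t) \<and> (\<forall>t\<in>T. \<exists>Q\<in>set Qs. Q t)"
      then have "\<exists>t\<in>T. (hd Qs) t" using \<open>hd Qs \<in> set Qs\<close> by blast
      then show False using \<open>T = {}\<close> by blast
    qed
  qed
  then have "\<not> sats T (bigoplus (map AAtom Qs))" using oplus_char[OF assms] by blast
  then show "\<not> valid \<phi> C (bigoplus (map AAtom Qs))"
    using S\<phi> unfolding valid_def T_def by blast
qed

end
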